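(* Let $\Delta \ge 1$ and $\alpha > \Delta$ be integers. There is an infinite family of graphs of maximum degree $\Delta$ and an absolute constant $C>0$ such that for every graph $G=(V,E)$ in the family and every assignment of nonempty sets $L(v) \subseteq \{1,\dots,\alpha\}$ to the vertices $v\in V$ with the property that every choice of one color $\ell_v \in L(v)$ for each $v \in V$ yields a proper $\alpha$-coloring of $G$, we have $\min_{v\in V}|L(v)| \le C\alpha/\Delta$, i.e. the solution domain has size $O(\alpha/\Delta)$. Consequently the contingency factor $\alpha/\min_{v}|L(v)|$ is $\Omega(\Delta)$.
   Context: A proper $\alpha$-coloring of a graph $G=(V,E)$ is a map $\varphi:V\to\{1,\dots,\alpha\}$ with $\varphi(u)\neq\varphi(v)$ for every edge $\{u,v\}\in E$. A "generic algorithm" for $\alpha$-coloring outputs for every vertex $v$ a set $L(v)$ of candidate colors such that any selection of one color from each set is a proper $\alpha$-coloring; the vertex then privately picks one of its candidates at random. The size of the problem domain is $\alpha$ (the number of available labels), the size of the solution domain is $k=\min_v |L(v)|$, and the contingency factor is $\alpha/k$. *)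

theory Defs
  imports Complex_Main
begin

definition simple_graph :: "nat set \<Rightarrow> nat set set \<Rightarrow> bool" where
  "simple_graph V E \<longleftrightarrow> finite V \<and>
     (\<forall>e\<in>E. \<exists>u v. e = {u, v} \<and> u \<noteq> v \<and> u \<in> V \<and> v \<in> V)"

definition degree :: "nat set set \<Rightarrow> nat \<Rightarrow> nat" where
  "degree E v = card {u. {u, v} \<in> E}"

definition max_degree :: "nat set \<Rightarrow> nat set set \<Rightarrow> nat" where
  "max_degree V E = Max (degree E ` V)"

definition proper_coloring :: "nat set \<Rightarrow> nat set set \<Rightarrow> nat \<Rightarrow> (nat \<Rightarrow> nat) \<Rightarrow> bool" where
  "proper_coloring V E \<alpha> \<phi> \<longleftrightarrow> (\<forall>v\<in>V. \<phi> v \<in> {1..\<alpha>}) \<and>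
     (\<forall>u v. {u, v} \<in> E \<longrightarrow> \<phi> u \<noteq> \<phi> v)"

text \<open>Output of a generic algorithm: nonempty candidate sets in {1..alpha} such that
  every selection is a proper alpha-coloring.\<close>
definition generic_lists :: "nat set \<Rightarrow> nat set set \<Rightarrow> nat \<Rightarrow> (nat \<Rightarrow> nat set) \<Rightarrow> bool" where
  "generic_lists V E \<alpha> L \<longleftrightarrow> (\<forall>v\<in>V. L v \<noteq> {} \<and> L v \<subseteq> {1..\<alpha>}) \<and>
     (\<forall>\<phi>. (\<forall>v\<in>V. \<phi> v \<in> L v) \<longrightarrow> proper_coloring V E \<alpha> \<phi>)"

end

theory Submission
  imports Defs
begin

definition gV :: "nat \<Rightarrow> nat \<Rightarrow> nat set" where
  "gV d m = {0..<m*d}"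

definition gE :: "nat \<Rightarrow> nat \<Rightarrow> nat set set" where
  "gE d m = {{u,v} | u v. u \<in> gV d m \<and> v \<in> gV d m \<and> u \<noteq> v \<and> u div d = v div d}"

lemma gE_iff: "{a,b} \<in> gE d m \<longleftrightarrow> a \<in> gV d m \<and> b \<in> gV d m \<and> a \<noteq> b \<and> a div d = b div d"
  unfolding gE_def by (auto simp: doubleton_eq_iff)

lemma simple_g: "simple_graph (gV d m) (gE d m)"
  unfolding simple_graph_def gE_def gV_def by blast

lemma nbr: assumes "v \<in> gV d m" "d > 0"
  shows "{u. {u,v} \<in> gE d m} = {v div d * d ..< v div d * d + d} - {v}"
proof -
  have vm: "v div d < m" using assms by (simp add: gV_def less_mult_imp_div_less)
  have "u \<in> gV d m" if "v div d * d \<le> u" "u < v div d * d + d" for u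
  proof -
    have "v div d * d + d \<le> m * d" using vm
      proof -
      have "Suc (v div d) * d \<le> m * d" using vm by (intro mult_le_mono1) simp
      then show ?thesis by simp
    qed
    then show ?thesis using that by (simp add: gV_def)
  qed
  moreover have "u div d = v div d \<longleftrightarrow> v div d * d \<le> u \<and> u < v div d * d + d" for u
  proof
    assume "u div d = v div d"
    then show "v div d * d \<le> u \<and> u < v div d * d + d"
      using dividend_less_div_times[OF assms(2), of u] div_times_less_eq_dividend[of u d]
      by (simp add: add.commute)
  next
    assume h: "v div d * d \<le> u \<and> u < v div d * d + d"
    show "u div d = v div d"
      by (rule div_nat_eqI) (use h in \<open>simp_all add: mult.commute\<close>)
  qed
  ultimately have "\<And>u. {u,v} \<in> gE d m \<longleftrightarrow> u \<in> {v div d * d ..< v div d * d + d} - {v}"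
    using assms(1) unfolding gE_iff by auto
  then show ?thesis by (intro set_eqI) simp
qed

lemma deg_g: assumes "v \<in> gV d m" "d > 0" shows "degree (gE d m) v = d - 1"
  unfolding degree_def nbr[OF assms]
proof -
  have "v \<in> {v div d * d ..< v div d * d + d}"
    using dividend_less_div_times[OF assms(2), of v] by (simp add: add.commute)
  then show "card ({v div d * d..<v div d * d + d} - {v}) = d - 1" by simp
qed

lemma maxdeg_g: assumes "m \<ge> 1" "d > 0" shows "max_degree (gV d m) (gE d m) = d - 1"
proof -
  have ne: "gV d m \<noteq> {}" using assms by (auto simp: gV_def)
  have "degree (gE d m) ` gV d m = {d - 1}" using deg_g[OF _ assms(2)] ne by auto
  then show ?thesis by (simp add: max_degree_def)
qed

lemma disj_lists:
  assumes gl: "generic_lists V E \<alpha> L" and uv: "u \<in> V" "v \<in> V" "{u,v} \<in> E"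
  shows "L u \<inter> L v = {}"
proof (rule ccontr)
  assume "L u \<inter> L v \<noteq> {}"
  then obtain c where c: "c \<in> L u" "c \<in> L v" by blast
  define \<phi> where "\<phi> x = (if x = u \<or> x = v then c else (SOME y. y \<in> L x))" for x
  have "\<forall>x\<in>V. \<phi> x \<in> L x"
  proof
    fix x assume "x \<in> V"
    then have "L x \<noteq> {}" using gl by (simp add: generic_lists_def)
    then show "\<phi> x \<in> L x" using c by (auto simp: \<phi>_def intro: someI_ex)
  qed
  then have "proper_coloring V E \<alpha> \<phi>" using gl by (simp add: generic_lists_def)
  then have "\<phi> u \<noteq> \<phi> v" using uv(3) by (simp add: proper_coloring_def)
  then show False by (simp add: \<phi>_def)
qed

lemma list_bound:
  assumes gl: "generic_lists (gV d m) (gE d m) \<alpha> L" and m: "m \<ge> 1" and d: "d > 0"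
  shows "d * Min ((\<lambda>v. card (L v)) ` gV d m) \<le> \<alpha>"
proof -
  let ?V = "gV d m"
  let ?M = "Min ((\<lambda>v. card (L v)) ` ?V)"
  have B: "{0..<d} \<subseteq> ?V" using m by (auto simp: gV_def intro: order_less_le_trans)
  have fin: "finite ?V" by (simp add: gV_def)
  have Lsub: "L v \<subseteq> {1..\<alpha>}" if "v \<in> ?V" for v using gl that by (simp add: generic_lists_def)
  have disj: "L u \<inter> L v = {}" if "u \<in> {0..<d}" "v \<in> {0..<d}" "u \<noteq> v" for u v
  proof (rule disj_lists[OF gl])
    show "u \<in> ?V" "v \<in> ?V" using that B by auto
    show "{u,v} \<in> gE d m" using that B by (auto simp: gE_iff)
  qed
  have "d * ?M = (\<Sum>v\<in>{0..<d}. ?M)" by simp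
  also have "\<dots> \<le> (\<Sum>v\<in>{0..<d}. card (L v))"
    by (rule sum_mono) (use B fin in auto)
  also have "\<dots> = card (\<Union>v\<in>{0..<d}. L v)"
    by (rule card_UN_disjoint[symmetric]) (use B Lsub disj in \<open>auto intro: finite_subset\<close>)
  also have "\<dots> \<le> card {1..\<alpha>}"
    by (rule card_mono) (use B Lsub in auto)
  finally show ?thesis by simp
qed

theorem theorem1:
  "\<exists>C::real. C > 0 \<and>
    (\<forall>\<Delta> \<alpha> :: nat. \<Delta> \<ge> 1 \<longrightarrow> \<alpha> > \<Delta> \<longrightarrow>
      (\<exists>F :: (nat set \<times> nat set set) set.
         infinite F \<and> (\<forall>n. \<exists>(V, E)\<in>F. card V \<ge> n) \<and>
         (\<forall>(V, E)\<in>F. simple_graph V E \<and> V \<noteq> {} \<and> max_degree V E = \<Delta> \<and>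
            (\<forall>L. generic_lists V E \<alpha> L \<longrightarrow>
                 real (Min ((\<lambda>v. card (L v)) ` V)) \<le> C * real \<alpha> / real \<Delta>))))"
proof (rule exI[of _ "1::real"], intro conjI allI impI)
  show "(0::real) < 1" by simp
  fix \<Delta> \<alpha> :: nat
  assume D: "\<Delta> \<ge> 1" and a: "\<alpha> > \<Delta>"
  define d where "d = Suc \<Delta>"
  have d0: "d > 0" by (simp add: d_def)
  define f where "f m = (gV d m, gE d m)" for m
  define F where "F = f ` {1..}"
  show "\<exists>F :: (nat set \<times> nat set set) set.
         infinite F \<and> (\<forall>n. \<exists>(V, E)\<in>F. card V \<ge> n) \<and>
         (\<forall>(V, E)\<in>F. simple_graph V E \<and> V \<noteq> {} \<and> max_degree V E = \<Delta> \<and>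
            (\<forall>L. generic_lists V E \<alpha> L \<longrightarrow>
                 real (Min ((\<lambda>v. card (L v)) ` V)) \<le> 1 * real \<alpha> / real \<Delta>))"
  proof (intro exI[of _ F] conjI)
  have cardV: "card (gV d m) = m * d" for m by (simp add: gV_def)
  have inj: "inj_on f {1..}"
    by (rule inj_onI) (metis cardV d0 f_def fst_conv mult_right_cancel neq0_conv)
  show "infinite F" unfolding F_def
    using finite_imageD[OF _ inj] infinite_Ici by blast
  show "\<forall>n. \<exists>(V, E)\<in>F. card V \<ge> n"
  proof
    fix n
    have "f (Suc n) \<in> F" by (simp add: F_def)
    moreover have "n \<le> Suc n * d" using d0 by (simp add: d_def)
    ultimately show "\<exists>(V, E)\<in>F. card V \<ge> n"
      by (intro bexI[of _ "f (Suc n)"]) (auto simp: f_def cardV)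
  qed
  show "\<forall>(V, E)\<in>F. simple_graph V E \<and> V \<noteq> {} \<and> max_degree V E = \<Delta> \<and>
            (\<forall>L. generic_lists V E \<alpha> L \<longrightarrow>
                 real (Min ((\<lambda>v. card (L v)) ` V)) \<le> 1 * real \<alpha> / real \<Delta>)"
  proof (rule ballI)
    fix p assume "p \<in> F"
    then obtain m where m: "1 \<le> m" and p: "p = (gV d m, gE d m)"
      by (auto simp: F_def f_def)
    have "simple_graph (gV d m) (gE d m) \<and> gV d m \<noteq> {} \<and> max_degree (gV d m) (gE d m) = \<Delta> \<and>
      (\<forall>L. generic_lists (gV d m) (gE d m) \<alpha> L \<longrightarrow>
           real (Min ((\<lambda>v. card (L v)) ` gV d m)) \<le> 1 * real \<alpha> / real \<Delta>)"
    proof (intro conjI allI impI)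
      show "simple_graph (gV d m) (gE d m)" by (rule simple_g)
      show "gV d m \<noteq> {}" using m d0 by (auto simp: gV_def)
      show "max_degree (gV d m) (gE d m) = \<Delta>" using maxdeg_g[OF m d0] by (simp add: d_def)
      fix L assume gl: "generic_lists (gV d m) (gE d m) \<alpha> L"
      let ?M = "Min ((\<lambda>v. card (L v)) ` gV d m)"
      have "d * ?M \<le> \<alpha>" by (rule list_bound[OF gl m d0])
      then have "real \<Delta> * real ?M \<le> real \<alpha>"
        by (metis d_def le_SucI mult_le_mono1 of_nat_le_iff of_nat_mult le_trans order_refl)
      then show "real ?M \<le> 1 * real \<alpha> / real \<Delta>" using D
        by (simp add: field_simps mult.commute)
    qed
    then show "case p of (V, E) \<Rightarrow> simple_graph V E \<and> V \<noteq> {} \<and> max_degree V E = \<Delta> \<and>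
            (\<forall>L. generic_lists V E \<alpha> L \<longrightarrow>
                 real (Min ((\<lambda>v. card (L v)) ` V)) \<le> 1 * real \<alpha> / real \<Delta>)"
      by (simp add: p)
  qed
  qed
qed

end
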